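(* Let $n\ge2$, $\beta_i>0$, $\nu_i\in[0,1]$ and $\rho_i\in[0,1]$ for $i\in\{1,\dots,n\}$, and consider the well-mixed resource–consumption system \[ \dot x=(1-x)x-x\sum_{i=1}^n y_i,\qquad \dot y_i=\beta_i\Big((1-\nu_i)(x-\rho_i)+\frac{\nu_i}{n-1}\sum_{j\ne i}(y_j-y_i)\Big),\quad i=1,\dots,n . \] Assume that at most one of $\nu_1,\dots,\nu_n$ equals $0$, and that it is not the case that all $\nu_i=1$, not the case that all $\nu_i=0$, not the case that all $\rho_i=1$, and not the case that all $\rho_i=0$. Then the point $(\bar x,\bar y_1,\dots,\bar y_n)$ given by \[ \bar x=\frac{\sum_{i}\Big(\rho_i(\nu_i-1)\prod_{j\ne i}\nu_j\Big)}{n\prod_{j}\nu_j-\sum_{j}\prod_{k\ne j}\nu_k}, \] \[ \bar y_i=\frac1n+\frac{\rho_i(\nu_i-1)\Big((1-n)\sum_{j\ne i}\prod_{k\ne i,j}\nu_k+n(n-2)\prod_{j\ne i}\nu_j\Big)-(1-n+n\nu_i)\sum_{j\ne i}\Big(\rho_j(\nu_j-1)\prod_{k\ne i,j}\nu_k\Big)}{n\Big(n\prod_{j}\nu_j-\sum_{j}\prod_{k\ne j}\nu_k\Big)}, \] for $i\in\{1,\dots,n\}$ (all indices ranging over $\{1,\dots,n\}$, empty products equal to $1$), is an equilibrium of the system.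
   Context: An equilibrium is a point $(\bar x,\bar y_1,\dots,\bar y_n)\in\mathbb{R}^{n+1}$ at which all right-hand sides vanish. *)

theory Defs
  imports Complex_Main
begin

text \<open>Indices range over {1..n}. The state is (x, y) with y :: nat => real,
  only y 1, ..., y n being relevant.\<close>

definition rhs_x :: "nat \<Rightarrow> real \<Rightarrow> (nat \<Rightarrow> real) \<Rightarrow> real" where
  "rhs_x n x y = (1 - x) * x - x * (\<Sum>i\<in>{1..n}. y i)"

definition rhs_y :: "nat \<Rightarrow> (nat \<Rightarrow> real) \<Rightarrow> (nat \<Rightarrow> real) \<Rightarrow> (nat \<Rightarrow> real)
    \<Rightarrow> real \<Rightarrow> (nat \<Rightarrow> real) \<Rightarrow> nat \<Rightarrow> real" where
  "rhs_y n \<beta> \<nu> \<rho> x y i =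
     \<beta> i * ((1 - \<nu> i) * (x - \<rho> i)
            + \<nu> i / (real n - 1) * (\<Sum>j\<in>{1..n} - {i}. (y j - y i)))"

definition is_equilibrium :: "nat \<Rightarrow> (nat \<Rightarrow> real) \<Rightarrow> (nat \<Rightarrow> real) \<Rightarrow> (nat \<Rightarrow> real)
    \<Rightarrow> real \<Rightarrow> (nat \<Rightarrow> real) \<Rightarrow> bool" where
  "is_equilibrium n \<beta> \<nu> \<rho> x y \<longleftrightarrow>
     rhs_x n x y = 0 \<and> (\<forall>i\<in>{1..n}. rhs_y n \<beta> \<nu> \<rho> x y i = 0)"

definition denom :: "nat \<Rightarrow> (nat \<Rightarrow> real) \<Rightarrow> real" where
  "denom n \<nu> = real n * (\<Prod>j\<in>{1..n}. \<nu> j) - (\<Sum>j\<in>{1..n}. \<Prod>k\<in>{1..n} - {j}. \<nu> k)"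

definition xbar :: "nat \<Rightarrow> (nat \<Rightarrow> real) \<Rightarrow> (nat \<Rightarrow> real) \<Rightarrow> real" where
  "xbar n \<nu> \<rho> =
     (\<Sum>i\<in>{1..n}. \<rho> i * (\<nu> i - 1) * (\<Prod>j\<in>{1..n} - {i}. \<nu> j)) / denom n \<nu>"

definition ybar :: "nat \<Rightarrow> (nat \<Rightarrow> real) \<Rightarrow> (nat \<Rightarrow> real) \<Rightarrow> nat \<Rightarrow> real" where
  "ybar n \<nu> \<rho> i =
     1 / real n +
     (\<rho> i * (\<nu> i - 1) *
        ((1 - real n) * (\<Sum>j\<in>{1..n} - {i}. \<Prod>k\<in>{1..n} - {i, j}. \<nu> k)
         + real n * (real n - 2) * (\<Prod>j\<in>{1..n} - {i}. \<nu> j))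
      - (1 - real n + real n * \<nu> i) *
          (\<Sum>j\<in>{1..n} - {i}. \<rho> j * (\<nu> j - 1) * (\<Prod>k\<in>{1..n} - {i, j}. \<nu> k)))
     / (real n * denom n \<nu>)"

end

theory Submission
  imports Defs
begin

lemma alg:
  fixes r v p s t n D A x y N a :: real
  assumes "D \<noteq> 0" "n \<ge> 2" "A = a*p + v*t" "D = (n*v-1)*p - v*s"
   "x = A/D" "y = 1/n + N/(n*D)" "N = a*((1-n)*s + n*(n-2)*p) - (1-n+n*v)*t"
   "a = r*(v-1)"
  shows "(1-v)*(x-r) + v/(n-1)*(1-x-n*y) = 0"
proof -
  have n1: "n - 1 \<noteq> 0" "n \<noteq> 0" using assms(2) by auto
  have "(1-v)*(x-r) + v/(n-1)*(1-x-n*y) = ((1-v)*(n-1)*(A-r*D) + v*(-A-N)) / ((n-1)*D)"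
    using n1 assms(1) unfolding assms(5,6) by (simp add: field_simps)
  also have "(1-v)*(n-1)*(A-r*D) + v*(-A-N) = 0" unfolding assms(3,4,7,8) by algebra
  finally show ?thesis by simp
qed

lemma sum_offdiag_swap:
  fixes f :: "nat \<Rightarrow> nat \<Rightarrow> real"
  assumes "finite I"
  shows "(\<Sum>i\<in>I. \<Sum>j\<in>I-{i}. f i j) = (\<Sum>j\<in>I. \<Sum>i\<in>I-{j}. f i j)"
proof -
  have ee: "I \<inter> {j. j \<noteq> i} = I - {i}" for i by auto
  have ee2: "I \<inter> {i. j \<noteq> i} = I - {j}" for j by auto
  have "(\<Sum>i\<in>I. \<Sum>j\<in>I-{i}. f i j) = (\<Sum>i\<in>I. \<Sum>j\<in>I. if j \<noteq> i then f i j else 0)"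
    using assms by (simp add: sum.If_cases ee ee2)
  also have "\<dots> = (\<Sum>j\<in>I. \<Sum>i\<in>I. if j \<noteq> i then f i j else 0)" by (rule sum.swap)
  also have "\<dots> = (\<Sum>j\<in>I. \<Sum>i\<in>I-{j}. f i j)"
    using assms by (simp add: sum.If_cases ee ee2)
  finally show ?thesis .
qed

theorem lemma10p6:
  fixes n :: nat and \<beta> \<nu> \<rho> :: "nat \<Rightarrow> real"
  assumes "n \<ge> 2"
    and "\<forall>i\<in>{1..n}. \<beta> i > 0"
    and "\<forall>i\<in>{1..n}. 0 \<le> \<nu> i \<and> \<nu> i \<le> 1"
    and "\<forall>i\<in>{1..n}. 0 \<le> \<rho> i \<and> \<rho> i \<le> 1"
    and "card {i\<in>{1..n}. \<nu> i = 0} \<le> 1"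
    and "\<not> (\<forall>i\<in>{1..n}. \<nu> i = 1)"
    and "\<not> (\<forall>i\<in>{1..n}. \<nu> i = 0)"
    and "\<not> (\<forall>i\<in>{1..n}. \<rho> i = 1)"
    and "\<not> (\<forall>i\<in>{1..n}. \<rho> i = 0)"
  shows "is_equilibrium n \<beta> \<nu> \<rho> (xbar n \<nu> \<rho>) (ybar n \<nu> \<rho>)"
proof -
  define I where "I = {1..n}"
  have fin: "finite I" unfolding I_def by simp
  have cardI: "card I = n" unfolding I_def by simp
  define P where "P i = (\<Prod>j\<in>I-{i}. \<nu> j)" for i
  define PP where "PP i j = (\<Prod>k\<in>I-{i,j}. \<nu> k)" for i j
  define S where "S i = (\<Sum>j\<in>I-{i}. PP i j)" for i
  define a where "a i = \<rho> i * (\<nu> i - 1)" for i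
  define T where "T i = (\<Sum>j\<in>I-{i}. a j * PP i j)" for i
  define A where "A = (\<Sum>i\<in>I. a i * P i)"
  define D where "D = denom n \<nu>"
  define N where "N i = a i * ((1 - real n) * S i + real n * (real n - 2) * P i)
      - (1 - real n + real n * \<nu> i) * T i" for i
  have xb: "xbar n \<nu> \<rho> = A / D"
    unfolding xbar_def A_def D_def a_def P_def I_def by simp
  have yb: "ybar n \<nu> \<rho> i = 1 / real n + N i / (real n * D)" for i
    unfolding ybar_def N_def D_def a_def P_def I_def S_def T_def PP_def by simp
  have PPsym: "PP i j = PP j i" for i j unfolding PP_def by (simp add: insert_commute)
  have Pj: "P j = \<nu> i * PP i j" if "i \<in> I" "j \<in> I" "i \<noteq> j" for i j
  proof -
    have "P j = \<nu> i * (\<Prod>k\<in>(I-{j})-{i}. \<nu> k)"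
      unfolding P_def using that fin by (simp add: prod.remove)
    moreover have "(I-{j})-{i} = I-{i,j}" by auto
    ultimately show ?thesis unfolding PP_def by simp
  qed
  have Q: "(\<Prod>j\<in>I. \<nu> j) = \<nu> i * P i" if "i \<in> I" for i
    unfolding P_def using that fin by (simp add: prod.remove)
  have Dsum: "D = (\<Sum>j\<in>I. (\<nu> j - 1) * P j)"
  proof -
    have "real n * (\<Prod>j\<in>I. \<nu> j) = (\<Sum>j\<in>I. \<nu> j * P j)"
    proof -
      have "(\<Sum>j\<in>I. \<nu> j * P j) = (\<Sum>j\<in>I. (\<Prod>j\<in>I. \<nu> j))"
        using Q by (intro sum.cong) auto
      thus ?thesis using cardI by simp
    qed
    thus ?thesis unfolding D_def denom_def P_def I_def
      by (simp add: algebra_simps sum_subtractf)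
  qed
  have Di: "D = (real n * \<nu> i - 1) * P i - \<nu> i * S i" if "i \<in> I" for i
  proof -
    have "(\<Sum>j\<in>I. P j) = P i + (\<Sum>j\<in>I-{i}. P j)" using that fin by (simp add: sum.remove)
    also have "(\<Sum>j\<in>I-{i}. P j) = \<nu> i * S i"
      unfolding S_def sum_distrib_left using Pj that by (intro sum.cong) auto
    finally have "(\<Sum>j\<in>I. P j) = P i + \<nu> i * S i" .
    thus ?thesis unfolding D_def denom_def using Q[OF that] cardI
      by (simp add: I_def P_def algebra_simps)
  qed
  have Ai: "A = a i * P i + \<nu> i * T i" if "i \<in> I" for i
  proof -
    have "A = a i * P i + (\<Sum>j\<in>I-{i}. a j * P j)" unfolding A_def using that fin by (simp add: sum.remove)
    also have "(\<Sum>j\<in>I-{i}. a j * P j) = \<nu> i * T i"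
      unfolding T_def sum_distrib_left using Pj that by (intro sum.cong) auto
    finally show ?thesis .
  qed
  have uniq: "k = m" if "k \<in> I" "m \<in> I" "\<nu> k = 0" "\<nu> m = 0" for k m
  proof (rule ccontr)
    assume "k \<noteq> m"
    have "{k, m} \<subseteq> {i\<in>{1..n}. \<nu> i = 0}" using that I_def by auto
    hence "card {k, m} \<le> card {i\<in>{1..n}. \<nu> i = 0}" by (intro card_mono) auto
    with \<open>k \<noteq> m\<close> assms(5) show False by simp
  qed
  have nu: "0 \<le> \<nu> i" "\<nu> i \<le> 1" if "i \<in> I" for i using assms(3) that I_def by auto
  have Dneg: "D < 0"
  proof -
    obtain j where j: "j \<in> I" "\<nu> j < 1" "\<forall>k\<in>I-{j}. \<nu> k \<noteq> 0"
    proof (cases "\<exists>k\<in>I. \<nu> k = 0")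
      case True
      then obtain k where "k \<in> I" "\<nu> k = 0" by blast
      then show ?thesis using that uniq by fastforce
    next
      case False
      obtain j where "j \<in> I" "\<nu> j \<noteq> 1" using assms(6) I_def by auto
      then show ?thesis using that False nu by (meson DiffD1 order_le_neq_trans)
    qed
    have "P j > 0" unfolding P_def using j nu
      by (intro prod_pos) (metis DiffD1 order_le_neq_trans)
    hence neg: "(\<nu> j - 1) * P j < 0" using j by (simp add: mult_neg_pos)
    have "(\<Sum>k\<in>I-{j}. (\<nu> k - 1) * P k) \<le> 0"
    proof (intro sum_nonpos)
      fix k assume "k \<in> I - {j}"
      hence "P k \<ge> 0" "\<nu> k - 1 \<le> 0" unfolding P_def using nu by (auto intro!: prod_nonneg)
      thus "(\<nu> k - 1) * P k \<le> 0" by (simp add: mult_nonpos_nonneg)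
    qed
    moreover have "D = (\<nu> j - 1) * P j + (\<Sum>k\<in>I-{j}. (\<nu> k - 1) * P k)"
      unfolding Dsum using j fin by (simp add: sum.remove)
    ultimately show ?thesis using neg by linarith
  qed
  hence D0: "D \<noteq> 0" by simp
  have n0: "real n \<noteq> 0" using assms(1) by simp
  have swap: "(\<Sum>i\<in>I. (1 - real n + real n * \<nu> i) * T i)
      = (\<Sum>j\<in>I. a j * ((1 - real n) * S j + real n * (real n - 1) * P j))"
  proof -
    have "(\<Sum>i\<in>I. (1 - real n + real n * \<nu> i) * T i)
        = (\<Sum>i\<in>I. \<Sum>j\<in>I-{i}. (1 - real n + real n * \<nu> i) * (a j * PP i j))"
      unfolding T_def sum_distrib_left by simp
    also have "\<dots> = (\<Sum>j\<in>I. \<Sum>i\<in>I-{j}. (1 - real n + real n * \<nu> i) * (a j * PP i j))"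
      by (rule sum_offdiag_swap[OF fin])
    also have "\<dots> = (\<Sum>j\<in>I. a j * ((1 - real n) * S j + real n * (real n - 1) * P j))"
    proof (rule sum.cong[OF refl])
      fix j assume j: "j \<in> I"
      have "(\<Sum>i\<in>I-{j}. (1 - real n + real n * \<nu> i) * (a j * PP i j))
          = (\<Sum>i\<in>I-{j}. a j * ((1 - real n) * PP j i + real n * P j))"
        using Pj j PPsym by (intro sum.cong) (auto simp: algebra_simps)
      also have "\<dots> = (\<Sum>i\<in>I-{j}. a j * (1 - real n) * PP j i) + (\<Sum>i\<in>I-{j}. a j * real n * P j)"
        by (simp only: sum.distrib[symmetric]) (rule sum.cong; simp add: algebra_simps)
      also have "\<dots> = a j * (1 - real n) * S j + real (card (I-{j})) * (a j * real n * P j)"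
        unfolding S_def sum_distrib_left by simp
      also have "real (card (I-{j})) = real n - 1" using fin j cardI assms(1) by (simp add: of_nat_diff)
      finally show "(\<Sum>i\<in>I-{j}. (1 - real n + real n * \<nu> i) * (a j * PP i j))
          = a j * ((1 - real n) * S j + real n * (real n - 1) * P j)" by (simp add: algebra_simps)
    qed
    finally show ?thesis .
  qed
  have sumN: "(\<Sum>i\<in>I. N i) = - real n * A"
    unfolding N_def sum_subtractf swap A_def
    by (simp add: sum_subtractf[symmetric] sum_distrib_left algebra_simps)
  have sumy: "(\<Sum>i\<in>I. ybar n \<nu> \<rho> i) = 1 - A / D"
  proof -
    have "(\<Sum>i\<in>I. ybar n \<nu> \<rho> i) = (\<Sum>i\<in>I. 1 / real n) + (\<Sum>i\<in>I. N i) / (real n * D)"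
      unfolding yb by (simp add: sum.distrib sum_divide_distrib)
    also have "\<dots> = 1 - A / D" using sumN cardI n0 D0 by simp
    finally show ?thesis .
  qed
  show ?thesis
    unfolding is_equilibrium_def
  proof (intro conjI ballI)
    show "rhs_x n (xbar n \<nu> \<rho>) (ybar n \<nu> \<rho>) = 0"
    proof -
      have "(\<Sum>i\<in>{1..n}. ybar n \<nu> \<rho> i) = 1 - A / D" using sumy I_def by simp
      thus ?thesis unfolding rhs_x_def xb by simp
    qed
  next
    fix i assume "i \<in> {1..n}"
    hence i: "i \<in> I" using I_def by simp
    have "(\<Sum>j\<in>{1..n} - {i}. ybar n \<nu> \<rho> j - ybar n \<nu> \<rho> i)
        = (\<Sum>j\<in>I. ybar n \<nu> \<rho> j) - ybar n \<nu> \<rho> i - (real n - 1) * ybar n \<nu> \<rho> i"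
      using fin i cardI assms(1) unfolding I_def[symmetric]
      by (simp add: sum_subtractf sum.remove of_nat_diff algebra_simps)
    also have "\<dots> = 1 - xbar n \<nu> \<rho> - real n * ybar n \<nu> \<rho> i"
      using sumy xb by (simp add: algebra_simps)
    finally have e: "(\<Sum>j\<in>{1..n} - {i}. ybar n \<nu> \<rho> j - ybar n \<nu> \<rho> i)
        = 1 - xbar n \<nu> \<rho> - real n * ybar n \<nu> \<rho> i" .
    have "(1 - \<nu> i) * (xbar n \<nu> \<rho> - \<rho> i) + \<nu> i / (real n - 1) * (1 - xbar n \<nu> \<rho> - real n * ybar n \<nu> \<rho> i) = 0"
      by (rule alg[OF D0 _ _ Di[OF i] xb yb N_def[of i]])
         (use assms(1) Ai[OF i] a_def in simp_all)
    thus "rhs_y n \<beta> \<nu> \<rho> (xbar n \<nu> \<rho>) (ybar n \<nu> \<rho>) i = 0"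
      unfolding rhs_y_def e by simp
  qed
qed

end
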